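(* Let $\Sigma$ be a finite alphabet, $\lambda\in[0,1)$, and let $L=\mathcal{L}^{>\lambda}(\mathcal{A}|\mathrm{D})$ for some quantum automaton $\mathcal{A}$ over $\Sigma$. Then: (1) For any $w\in\Sigma^+$, $u\in\Sigma^*$ and $v\in\Sigma^\omega$, if $uv\in L$ then there are infinitely many positive integers $k$ such that $uw^kv\in L$. (2) For any $v\in L$, there are infinitely many finite prefixes $v_n$ of $v$ such that $v_nw^\omega\in L$ for all $w\in\Sigma^+$. (3) For any positive integer $n$, each $w\in L$ can be written as $w=xyz$ with $x,y\in\Sigma^*$, $z\in\Sigma^\omega$, such that $|x|\ge n$, $|y|\ge1$, and $xy^kz\in L$ for all $k\in\mathbb{N}$.
   Context: A quantum automaton is a tuple $\mathcal{A}=(\mathcal{H},|s_0\rangle,\Sigma,\{U_\sigma:\sigma\in\Sigma\},F)$ where $\mathcal{H}$ is a finite-dimensional complex Hilbert space, $|s_0\rangle$ a unit vector, $\Sigma$ a finite alphabet, each $U_\sigma$ unitary, and $F$ a subspace. For $w=\sigma_1\sigma_2\cdots\in\Sigma^\omega$, a unit vector $|\psi\rangle\in F$ and checkpoints $0\le n_1<n_2<\cdots$, the disturbing run is $|s_0\rangle$ (initial state) and for $n\ge1$: $|s_n\rangle=U_{\sigma_n}|\psi\rangle$ if $n-1=n_i$ for some $i$, else $|s_n\rangle=U_{\sigma_n}|s_{n-1}\rangle$. Then $f^{\mathrm{D}}_{\mathcal{A}}(w)=\sup_{|\psi\rangle}\sup_{\{n_i\}}\inf_{i\ge1}|\langle\psi|s_{n_i}\rangle|^2$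 (sup over unit $|\psi\rangle\in F$ and strictly increasing checkpoint sequences), and $\mathcal{L}^{>\lambda}(\mathcal{A}|\mathrm{D})=\{w\in\Sigma^\omega: f^{\mathrm{D}}_{\mathcal{A}}(w)>\lambda\}$. $|x|$ is the length of a finite word $x$. *)

theory Defs
  imports "HOL-Analysis.Analysis" "HOL-Library.Omega_Words_Fun"
begin

record ('a, 'n) qaut =
  qa_init :: "complex ^ 'n"
  qa_trans :: "'a \<Rightarrow> complex ^ 'n ^ 'n"
  qa_acc :: "(complex ^ 'n) set"

definition cinner :: "complex ^ 'n::finite \<Rightarrow> complex ^ 'n \<Rightarrow> complex" where
  "cinner x y = (\<Sum>i\<in>UNIV. cnj (x $ i) * y $ i)"

definition adjoint_mat :: "complex ^ 'n::finite ^ 'n \<Rightarrow> complex ^ 'n ^ 'n" where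
  "adjoint_mat U = (\<chi> i j. cnj (U $ j $ i))"

definition unitary_mat :: "complex ^ 'n::finite ^ 'n \<Rightarrow> bool" where
  "unitary_mat U \<longleftrightarrow> U ** adjoint_mat U = mat 1 \<and> adjoint_mat U ** U = mat 1"

definition csubspace :: "(complex ^ 'n::finite) set \<Rightarrow> bool" where
  "csubspace F \<longleftrightarrow> 0 \<in> F \<and> (\<forall>x\<in>F. \<forall>y\<in>F. x + y \<in> F) \<and> (\<forall>c x. x \<in> F \<longrightarrow> c *s x \<in> F)"

definition qaut_wf :: "('a, 'n::finite) qaut \<Rightarrow> bool" where
  "qaut_wf A \<longleftrightarrow> norm (qa_init A) = 1 \<and> (\<forall>a. unitary_mat (qa_trans A a)) \<and> csubspace (qa_acc A)"

text \<open>Disturbing run: state s_m for m \<ge> 0; the checkpoint sequence c enumerates n_1 < n_2 < ...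
  (c 0 = n_1). Letter sigma_{m+1} is w m.\<close>
fun drun :: "('a, 'n::finite) qaut \<Rightarrow> 'a word \<Rightarrow> complex ^ 'n \<Rightarrow> (nat \<Rightarrow> nat) \<Rightarrow> nat \<Rightarrow> complex ^ 'n" where
  "drun A w \<psi> c 0 = qa_init A"
| "drun A w \<psi> c (Suc m) = qa_trans A (w m) *v (if m \<in> range c then \<psi> else drun A w \<psi> c m)"

definition fD :: "('a, 'n::finite) qaut \<Rightarrow> 'a word \<Rightarrow> ereal" where
  "fD A w = (SUP \<psi>\<in>{\<psi>. \<psi> \<in> qa_acc A \<and> norm \<psi> = 1}. SUP c\<in>{c::nat\<Rightarrow>nat. strict_mono c}.
      INF i. ereal ((cmod (cinner \<psi> (drun A w \<psi> c (c i))))\<^sup>2))"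

definition langD :: "('a, 'n::finite) qaut \<Rightarrow> real \<Rightarrow> 'a word set" where
  "langD A lam = {w. fD A w > ereal lam}"

end

theory Submission
  imports Defs
begin


lemma cinner_self: "cinner x x = of_real ((norm x)^2)"
proof -
  have "cinner x x = (\<Sum>i\<in>UNIV. of_real ((cmod (x$i))^2))"
    unfolding cinner_def by (intro sum.cong refl) (metis complex_norm_square mult.commute)
  also have "\<dots> = of_real (\<Sum>i\<in>UNIV. (cmod (x$i))^2)" by simp
  also have "(\<Sum>i\<in>UNIV. (cmod (x$i))^2) = (norm x)^2"
    unfolding norm_vec_def L2_set_def by (simp add: sum_nonneg)
  finally show ?thesis .
qed

lemma cinner_CS: "cmod (cinner x y) \<le> norm x * norm y"
proof -
  have "cmod (cinner x y) \<le> (\<Sum>i\<in>UNIV. cmod (cnj (x$i) * y$i))"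
    unfolding cinner_def by (rule norm_sum)
  also have "\<dots> = (\<Sum>i\<in>UNIV. \<bar>cmod (x$i)\<bar> * \<bar>cmod (y$i)\<bar>)" by (simp add: norm_mult)
  also have "\<dots> \<le> L2_set (\<lambda>i. cmod (x$i)) UNIV * L2_set (\<lambda>i. cmod (y$i)) UNIV"
    by (rule L2_set_mult_ineq)
  finally show ?thesis by (simp add: norm_vec_def)
qed

lemma cinner_diff_right: "cinner x (y - z) = cinner x y - cinner x z"
  unfolding cinner_def by (simp add: algebra_simps sum_subtractf)

lemma cinner_adj: "cinner (A *v x) y = cinner x (adjoint_mat A *v y)"
proof -
  have "cinner (A *v x) y = (\<Sum>i\<in>UNIV. \<Sum>j\<in>UNIV. cnj (A$i$j) * cnj (x$j) * y$i)"
    unfolding cinner_def matrix_vector_mult_def by (simp add: sum_distrib_right)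
  also have "\<dots> = (\<Sum>j\<in>UNIV. \<Sum>i\<in>UNIV. cnj (A$i$j) * cnj (x$j) * y$i)"
    by (rule sum.swap)
  also have "\<dots> = cinner x (adjoint_mat A *v y)"
    unfolding cinner_def matrix_vector_mult_def adjoint_mat_def
    by (simp add: sum_distrib_left mult_ac)
  finally show ?thesis .
qed

lemma unitary_norm:
  assumes "unitary_mat U" shows "norm (U *v x) = norm x"
proof -
  have "adjoint_mat U ** U = mat 1" using assms unitary_mat_def by blast
  hence "cinner (U *v x) (U *v x) = cinner x x"
    by (simp add: cinner_adj matrix_vector_mul_assoc)
  hence "complex_of_real ((norm (U *v x))^2) = complex_of_real ((norm x)^2)" by (simp only: cinner_self)
  hence "(norm (U *v x))^2 = (norm x)^2" using of_real_eq_iff by blast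
  thus ?thesis by (simp add: power2_eq_iff_nonneg)
qed

lemma perturb:
  assumes "norm \<psi> = 1" "norm x \<le> 1" "norm y \<le> 1"
  shows "(cmod (cinner \<psi> x))^2 \<ge> (cmod (cinner \<psi> y))^2 - 2 * norm (x - y)"
proof -
  define a where "a = cmod (cinner \<psi> x)"
  define b where "b = cmod (cinner \<psi> y)"
  have a1: "a \<le> 1" using cinner_CS[of \<psi> x] assms unfolding a_def by simp
  have b1: "b \<le> 1" using cinner_CS[of \<psi> y] assms unfolding b_def by simp
  have "\<bar>b - a\<bar> \<le> cmod (cinner \<psi> y - cinner \<psi> x)" unfolding a_def b_def
    by (metis abs_norm_cancel norm_minus_commute norm_triangle_ineq3)
  also have "\<dots> = cmod (cinner \<psi> (y - x))" by (simp add: cinner_diff_right)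
  also have "\<dots> \<le> norm (x - y)" using cinner_CS[of \<psi> "y - x"] assms by (simp add: norm_minus_commute)
  finally have d: "\<bar>b - a\<bar> \<le> norm (x - y)" .
  have "b^2 - a^2 = (b - a) * (b + a)" by (simp add: power2_eq_square algebra_simps)
  also have "\<dots> \<le> \<bar>b - a\<bar> * 2"
  proof -
    have "(b - a) * (b + a) \<le> \<bar>b - a\<bar> * (b + a)" using a_def b_def
      by (intro mult_right_mono) auto
    also have "\<dots> \<le> \<bar>b - a\<bar> * 2" using a1 b1 by (intro mult_left_mono) auto
    finally show ?thesis .
  qed
  finally have "b^2 - a^2 \<le> \<bar>b - a\<bar> * 2" .
  hence "a^2 \<ge> b^2 - 2 * norm (x - y)" using d by (smt (verit))
  thus ?thesis unfolding a_def b_def .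
qed



fun Mw :: "('a, 'n::finite) qaut \<Rightarrow> 'a word \<Rightarrow> nat \<Rightarrow> nat \<Rightarrow> complex ^ 'n ^ 'n" where
  "Mw A f a 0 = mat 1"
| "Mw A f a (Suc n) = qa_trans A (f (a + n)) ** Mw A f a n"

lemma Mw_cong: "(\<And>t. t < n \<Longrightarrow> f (a + t) = g (b + t)) \<Longrightarrow> Mw A f a n = Mw A g b n"
  by (induction n) auto

lemma Mw_add: "Mw A f a (n + m) = Mw A f (a + n) m ** Mw A f a n"
  by (induction m) (auto simp: matrix_mul_assoc add.assoc)

lemma Mw_norm: "qaut_wf A \<Longrightarrow> norm (Mw A f a n *v x) = norm x"
  by (induction n) (auto simp: qaut_wf_def unitary_norm simp flip: matrix_vector_mul_assoc)

lemma drun_init: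
  "(\<And>t. t < n \<Longrightarrow> t \<notin> range c) \<Longrightarrow> drun A f \<psi> c n = Mw A f 0 n *v qa_init A"
  by (induction n) (auto simp flip: matrix_vector_mul_assoc)

lemma drun_seg:
  assumes "a \<in> range c" "\<And>t. a < t \<Longrightarrow> t < a + n \<Longrightarrow> t \<notin> range c" "n \<ge> 1"
  shows "drun A f \<psi> c (a + n) = Mw A f a n *v \<psi>"
  using assms(2,3)
proof (induction n)
  case 0 then show ?case by simp
next
  case (Suc n)
  show ?case
  proof (cases "n = 0")
    case True then show ?thesis using assms(1) by simp
  next
    case False
    hence "a + n \<notin> range c" using Suc.prems by auto
    then show ?thesis using Suc False by (simp flip: matrix_vector_mul_assoc)
  qed
qed

definition st :: "(nat \<Rightarrow> nat) \<Rightarrow> nat \<Rightarrow> nat" where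
  "st c j = (case j of 0 \<Rightarrow> 0 | Suc i \<Rightarrow> c i)"

definition sv :: "('a, 'n::finite) qaut \<Rightarrow> complex ^ 'n \<Rightarrow> nat \<Rightarrow> complex ^ 'n" where
  "sv A \<psi> j = (case j of 0 \<Rightarrow> qa_init A | Suc i \<Rightarrow> \<psi>)"

definition meas where
  "meas A f \<psi> c j = (cmod (cinner \<psi> (Mw A f (st c j) (c j - st c j) *v sv A \<psi> j)))^2"

lemma st_simps[simp]: "st c 0 = 0" "st c (Suc i) = c i" by (simp_all add: st_def)
lemma sv_simps[simp]: "sv A \<psi> 0 = qa_init A" "sv A \<psi> (Suc i) = \<psi>" by (simp_all add: sv_def)

lemma drun_meas:
  assumes "strict_mono c"
  shows "drun A f \<psi> c (c j) = Mw A f (st c j) (c j - st c j) *v sv A \<psi> j"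
proof (cases j)
  case 0
  have "\<And>t. t < c 0 \<Longrightarrow> t \<notin> range c"
    using strict_mono_less[OF assms] by auto
  then show ?thesis using 0 by (simp add: drun_init)
next
  case (Suc i)
  have lt: "c i < c (Suc i)" using assms by (simp add: strict_mono_less)
  have "drun A f \<psi> c (c i + (c (Suc i) - c i)) = Mw A f (c i) (c (Suc i) - c i) *v \<psi>"
  proof (rule drun_seg)
    show "c i \<in> range c" by simp
    show "1 \<le> c (Suc i) - c i" using lt by simp
    fix t assume "c i < t" "t < c i + (c (Suc i) - c i)"
    then have "c i < t" "t < c (Suc i)" using lt by auto
    then show "t \<notin> range c" using strict_mono_less[OF assms] by auto
  qed
  then show ?thesis using Suc lt by simp
qed

lemma L_intro:
  assumes "\<psi> \<in> qa_acc A" "norm \<psi> = 1" "strict_mono c" "lam < \<mu>" "\<And>j. \<mu> \<le> meas A f \<psi> c j"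
  shows "f \<in> langD A lam"
proof -
  have "ereal \<mu> \<le> (INF i. ereal ((cmod (cinner \<psi> (drun A f \<psi> c (c i))))\<^sup>2))"
    using assms(5) by (intro INF_greatest) (simp add: drun_meas[OF assms(3)] meas_def)
  also have "\<dots> \<le> (SUP c\<in>{c::nat\<Rightarrow>nat. strict_mono c}.
      INF i. ereal ((cmod (cinner \<psi> (drun A f \<psi> c (c i))))\<^sup>2))"
    using assms(3) by (intro SUP_upper) simp
  also have "\<dots> \<le> fD A f" unfolding fD_def using assms(1,2)
    by (intro SUP_upper[where f = "\<lambda>\<psi>. SUP c\<in>{c::nat\<Rightarrow>nat. strict_mono c}.
      INF i. ereal ((cmod (cinner \<psi> (drun A f \<psi> c (c i))))\<^sup>2)"]) simp
  finally have le: "ereal \<mu> \<le> fD A f" .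
  have "ereal lam < ereal \<mu>" using assms(4) by simp
  hence "ereal lam < fD A f" using le by (rule less_le_trans)
  thus ?thesis unfolding langD_def by simp
qed

lemma L_elim:
  assumes "f \<in> langD A lam"
  obtains \<psi> c \<mu> where "\<psi> \<in> qa_acc A" "norm \<psi> = 1" "strict_mono c" "lam < \<mu>"
    "\<And>j. \<mu> \<le> meas A f \<psi> c j"
proof -
  from assms obtain \<psi> c where p: "\<psi> \<in> qa_acc A" "norm \<psi> = 1" "strict_mono c"
    and lt: "ereal lam < (INF i. ereal ((cmod (cinner \<psi> (drun A f \<psi> c (c i))))\<^sup>2))"
    unfolding langD_def fD_def less_SUP_iff by auto
  from ereal_dense2[OF lt] obtain \<mu> where m: "ereal lam < ereal \<mu>"
    "ereal \<mu> < (INF i. ereal ((cmod (cinner \<psi> (drun A f \<psi> c (c i))))\<^sup>2))" by blast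
  have "\<And>j. \<mu> \<le> meas A f \<psi> c j"
  proof -
    fix j
    have "ereal \<mu> \<le> ereal ((cmod (cinner \<psi> (drun A f \<psi> c (c j))))\<^sup>2)"
      using m(2) INF_lower[of j UNIV] by (meson UNIV_I less_imp_le order_trans)
    thus "\<mu> \<le> meas A f \<psi> c j" by (simp add: meas_def drun_meas[OF p(3)])
  qed
  then show ?thesis using that p m(1) by simp
qed

fun mpow :: "complex ^ 'n::finite ^ 'n \<Rightarrow> nat \<Rightarrow> complex ^ 'n ^ 'n" where
  "mpow U 0 = mat 1"
| "mpow U (Suc k) = U ** mpow U k"

lemma mpow_add: "mpow U (a + b) = mpow U a ** mpow U b"
  by (induction a) (auto simp: matrix_mul_assoc)

lemma mpow_norm: "(\<And>x. norm (U *v x) = norm x) \<Longrightarrow> norm (mpow U k *v x) = norm x"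
  by (induction k) (auto simp flip: matrix_vector_mul_assoc)



lemma recurrence:
  fixes U :: "complex ^ 'n::finite ^ 'n"
  assumes nU: "\<And>x. norm (U *v x) = norm x" and e: "\<epsilon> > 0"
  shows "\<exists>k>N. norm (mpow U k *v y - y) < \<epsilon>"
proof -
  define g where "g k = mpow U k *v y" for k
  have "bounded (range g)" unfolding bounded_iff g_def
    using mpow_norm[OF nU] by (intro exI[of _ "norm y"]) auto
  then obtain l r where r: "strict_mono r" and l: "(g \<circ> r) \<longlonglongrightarrow> l"
    using bounded_imp_convergent_subsequence by blast
  have e2: "\<epsilon>/2 > 0" using e by simp
  from l[unfolded lim_sequentially, rule_format, OF e2] obtain M where M: "\<And>m. m \<ge> M \<Longrightarrow> dist ((g \<circ> r) m) l < \<epsilon>/2" by blast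
  have inc: "r M + d \<le> r (M + d)" for d
  proof (induction d)
    case (Suc d)
    have "r (M + d) < r (M + Suc d)" using r by (simp add: strict_mono_less)
    then show ?case using Suc by simp
  qed simp
  define D where "D = r (M + N + 1) - r M"
  have D: "D > N" "r (M + N + 1) = r M + D" using inc[of "N+1"] unfolding D_def by (auto simp: add.assoc)
  have "dist (g (r (M + N + 1))) (g (r M)) < \<epsilon>"
  proof (rule dist_triangle_half_l)
    show "dist (g (r (M + N + 1))) l < \<epsilon> / 2" using M[of "M + N + 1"] by simp
    show "dist (g (r M)) l < \<epsilon> / 2" using M[of M] by simp
  qed
  moreover have "g (r (M + N + 1)) - g (r M) = mpow U (r M) *v (mpow U D *v y - y)"
    unfolding g_def D(2) mpow_add by (simp only: matrix_vector_mult_diff_distrib matrix_vector_mul_assoc)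
  ultimately have "norm (mpow U D *v y - y) < \<epsilon>"
    by (simp add: dist_norm mpow_norm[OF nU])
  then show ?thesis using D(1) by blast
qed



lemma omega_mpow:
  assumes "w \<noteq> []"
  shows "Mw A (w\<^sup>\<omega>) (q * length w) (k * length w) = mpow (Mw A (w\<^sup>\<omega>) 0 (length w)) k"
proof (induction k)
  case 0 then show ?case by simp
next
  case (Suc k)
  have "Mw A (w\<^sup>\<omega>) (q * length w) (Suc k * length w)
      = Mw A (w\<^sup>\<omega>) (q * length w + k * length w) (length w) ** Mw A (w\<^sup>\<omega>) (q * length w) (k * length w)"
    using Mw_add[of A "w\<^sup>\<omega>" "q * length w" "k * length w" "length w"] by (simp add: add.commute)
  also have "Mw A (w\<^sup>\<omega>) (q * length w + k * length w) (length w) = Mw A (w\<^sup>\<omega>) 0 (length w)"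
  proof (rule Mw_cong)
    fix t
    have "(q * length w + k * length w + t) mod length w = t mod length w"
      using mod_mult_self1[of t "q + k" "length w"] by (simp add: algebra_simps)
    then show "w\<^sup>\<omega> (q * length w + k * length w + t) = w\<^sup>\<omega> (0 + t)" using assms by simp
  qed
  finally show ?case using Suc by simp
qed

lemma concat_rep_nth:
  "t < k * length w \<Longrightarrow> concat (replicate k w) ! t = w ! (t mod length w)"
proof (induction k arbitrary: t)
  case 0 then show ?case by simp
next
  case (Suc k)
  show ?case
  proof (cases "t < length w")
    case True then show ?thesis by (simp add: nth_append)
  next
    case False
    then have "t - length w < k * length w" using Suc.prems by auto
    then show ?thesis using False Suc.IH[of "t - length w"]
      by (simp add: nth_append le_mod_geq)
  qed
qed

lemma cinner_unit: "norm \<psi> = 1 \<Longrightarrow> (cmod (cinner \<psi> \<psi>))^2 = 1"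
  by (simp add: cinner_self)

lemma part2:
  assumes wf: "qaut_wf A" and lam1: "lam < 1" and v: "v \<in> langD A lam"
  shows "infinite {m::nat. \<forall>w. w \<noteq> [] \<longrightarrow> prefix m v \<frown> w\<^sup>\<omega> \<in> langD A lam}"
proof -
  obtain \<psi> c \<mu> where p: "\<psi> \<in> qa_acc A" "norm \<psi> = 1" "strict_mono c" "lam < \<mu>"
    and mu: "\<And>j. \<mu> \<le> meas A v \<psi> c j" using L_elim[OF v] by blast
  have "range c \<subseteq> {m::nat. \<forall>w. w \<noteq> [] \<longrightarrow> prefix m v \<frown> w\<^sup>\<omega> \<in> langD A lam}"
  proof (clarify)
    fix i w assume wne: "w \<noteq> ([]::'a list)"
    define L where "L = length w"
    have L0: "L > 0" using wne L_def by simp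
    define U where "U = Mw A (w\<^sup>\<omega>) 0 L"
    have nU: "\<And>x. norm (U *v x) = norm x" unfolding U_def using Mw_norm[OF wf] by blast
    define \<delta> where "\<delta> = (1 - lam) / 4"
    have d0: "\<delta> > 0" using lam1 \<delta>_def by simp
    obtain k where k: "k > 0" "norm (mpow U k *v \<psi> - \<psi>) < \<delta>"
      using recurrence[OF nU d0, of 0 \<psi>] by blast
    define f' where "f' = prefix (c i) v \<frown> w\<^sup>\<omega>"
    define c' where "c' j = (if j \<le> i then c j else c i + (j - i) * (k * L))" for j
    have kL: "k * L > 0" using k L0 by simp
    have sm: "strict_mono c'"
      unfolding strict_mono_Suc_iff
    proof
      fix j
      show "c' j < c' (Suc j)"
      proof (cases "j < i")
        case True then show ?thesis using p(3) by (simp add: c'_def strict_mono_less)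
      next
        case False
        then show ?thesis using kL by (auto simp: c'_def Suc_diff_le)
      qed
    qed
    define \<mu>' where "\<mu>' = min \<mu> (1 - 2 * \<delta>)"
    have "\<mu>' \<le> meas A f' \<psi> c' j" for j
    proof (cases "j \<le> i")
      case True
      have stq: "st c' j = st c j" using True by (cases j) (auto simp: c'_def)
      have cq: "c' j = c j" using True by (simp add: c'_def)
      have le: "c j \<le> c i" using True p(3) by (simp add: strict_mono_less_eq)
      have "Mw A f' (st c j) (c j - st c j) = Mw A v (st c j) (c j - st c j)"
      proof (rule Mw_cong)
        fix t assume "t < c j - st c j"
        then have "st c j + t < c i" using le by linarith
        then show "f' (st c j + t) = v (st c j + t)" unfolding f'_def by simp
      qed
      then have "meas A f' \<psi> c' j = meas A v \<psi> c j" unfolding meas_def stq cq by simp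
      then show ?thesis using mu[of j] \<mu>'_def by simp
    next
      case False
      then obtain d where j': "j = Suc (i + d)" by (auto dest: less_imp_Suc_add simp: not_le)
      define X where "X = d * k * L"
      have stq: "st c' j = c i + X" using j' by (cases d) (auto simp: c'_def X_def algebra_simps)
      have cq: "c' j = c i + X + k * L" using j' unfolding c'_def X_def
        by (simp add: algebra_simps)
      have "Mw A f' (c i + X) (k * L) = Mw A (w\<^sup>\<omega>) ((d * k) * L) (k * L)"
      proof (rule Mw_cong)
        fix t show "f' (c i + X + t) = w\<^sup>\<omega> (d * k * L + t)"
          unfolding f'_def X_def by simp
      qed
      also have "\<dots> = mpow U k" unfolding U_def L_def by (rule omega_mpow[OF wne])
      finally have M: "Mw A f' (st c' j) (c' j - st c' j) = mpow U k" using stq cq by simp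
      have "meas A f' \<psi> c' j = (cmod (cinner \<psi> (mpow U k *v \<psi>)))^2"
        unfolding meas_def M using j' by simp
      also have "\<dots> \<ge> (cmod (cinner \<psi> \<psi>))^2 - 2 * norm (mpow U k *v \<psi> - \<psi>)"
        by (rule perturb) (simp_all add: p(2) mpow_norm[OF nU])
      finally have "meas A f' \<psi> c' j \<ge> 1 - 2 * \<delta>" using k(2) cinner_unit[OF p(2)] by linarith
      then show ?thesis unfolding \<mu>'_def by simp
    qed
    moreover have "lam < \<mu>'" unfolding \<mu>'_def \<delta>_def using p(4) lam1 by (simp add: field_simps)
    ultimately show "prefix (c i) v \<frown> w\<^sup>\<omega> \<in> langD A lam"
      using L_intro[OF p(1,2) sm] unfolding f'_def by blast
  qed
  moreover have "infinite (range c)"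
    using p(3) strict_mono_imp_inj_on range_inj_infinite by blast
  ultimately show ?thesis using infinite_super by blast
qed



lemma meas_eq:
  assumes "sv A \<psi> m = sv A \<psi> m0" "c' m - st c' m = c m0 - st c m0"
    "\<And>t. t < c m0 - st c m0 \<Longrightarrow> f' (st c' m + t) = f (st c m0 + t)"
  shows "meas A f' \<psi> c' m = meas A f \<psi> c m0"
proof -
  have "Mw A f' (st c' m) (c' m - st c' m) = Mw A f (st c m0) (c m0 - st c m0)"
    unfolding assms(2) by (rule Mw_cong) (rule assms(3))
  then show ?thesis unfolding meas_def assms(1) by simp
qed

lemma part3:
  assumes f: "f \<in> langD A lam" and n: "n > 0"
  shows "\<exists>x y z. f = x \<frown> (y \<frown> z) \<and> length x \<ge> n \<and> length y \<ge> 1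
            \<and> (\<forall>k::nat. (x @ concat (replicate k y)) \<frown> z \<in> langD A lam)"
proof -
  obtain \<psi> c \<mu> where p: "\<psi> \<in> qa_acc A" "norm \<psi> = 1" "strict_mono c" "lam < \<mu>"
    and mu: "\<And>j. \<mu> \<le> meas A f \<psi> c j" using L_elim[OF f] by blast
  have sl: "\<And>a b. (c a < c b) = (a < b)" using strict_mono_less[OF p(3)] .
  have sle: "\<And>a b. (c a \<le> c b) = (a \<le> b)" using strict_mono_less_eq[OF p(3)] .
  define i where "i = n"
  define d where "d = c (Suc i) - c i"
  have cS: "c (Suc i) = c i + d" and d1: "d \<ge> 1" using sl[of i "Suc i"] unfolding d_def by auto
  define x where "x = prefix (c i) f"
  define y where "y = map f [c i..<c (Suc i)]"
  define z where "z = suffix (c (Suc i)) f"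
  have lx: "length x = c i" and ly: "length y = d" unfolding x_def y_def d_def by simp_all
  have ynth: "\<And>t. t < d \<Longrightarrow> y ! t = f (c i + t)" unfolding y_def d_def by simp
  have dec: "f = x \<frown> (y \<frown> z)"
  proof
    fix t
    show "f t = (x \<frown> (y \<frown> z)) t"
    proof (cases "t < c i")
      case True then show ?thesis by (simp add: x_def nth_append)
    next
      case False
      show ?thesis
      proof (cases "t < c (Suc i)")
        case True then show ?thesis using False ly ynth[of "t - c i"] cS
          by (simp add: lx nth_append)
      next
        case False2: False
        then show ?thesis using False ly lx cS by (simp add: z_def)
      qed
    qed
  qed
  have lxn: "length x \<ge> n" using lx strict_mono_imp_increasing[OF p(3), of i] i_def by simp
  have "(x @ concat (replicate k y)) \<frown> z \<in> langD A lam" for k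
  proof -
    define f' where "f' = (x @ concat (replicate k y)) \<frown> z"
    have lcr: "length (concat (replicate k y)) = k * d" using ly
      by (simp add: length_concat sum_list_replicate)
    have la: "\<And>t. t < c i \<Longrightarrow> f' t = f t" unfolding f'_def using lx
      by (simp add: nth_append x_def)
    have lb: "\<And>t. t < k * d \<Longrightarrow> f' (c i + t) = f (c i + t mod d)"
    proof -
      fix t assume t: "t < k * d"
      have "f' (c i + t) = (x @ concat (replicate k y)) ! (c i + t)" unfolding f'_def
        using lx t lcr by (intro conc_fst) simp
      also have "\<dots> = concat (replicate k y) ! t" using lx by (simp add: nth_append)
      also have "\<dots> = y ! (t mod d)" using concat_rep_nth[of t k y] t ly by simp
      also have "\<dots> = f (c i + t mod d)" using ynth d1 by simp
      finally show "f' (c i + t) = f (c i + t mod d)" .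
    qed
    have lc: "\<And>t. f' (c i + k * d + t) = f (c (Suc i) + t)" unfolding f'_def using lx lcr cS
      by (simp add: z_def)
    define c' where "c' m = (if m \<le> i then c m else if m \<le> i + k then c i + (m - i) * d
        else c i + k * d + (c (Suc (m - k)) - c (Suc i)))" for m
    have sm: "strict_mono c'" unfolding strict_mono_Suc_iff
    proof
      fix m
      show "c' m < c' (Suc m)"
      proof -
        consider "Suc m \<le> i" | "m = i" | "i < m" "Suc m \<le> i + k" | "i < m" "m = i + k" | "i + k < m"
          by linarith
        then show ?thesis
        proof cases
          case 1 then show ?thesis using sl by (simp add: c'_def)
        next
          case 2 then show ?thesis using sl[of "Suc i" "Suc (Suc i)"] d1
            by (cases k) (auto simp: c'_def)
        next
          case 3 then show ?thesis using d1 by (auto simp: c'_def Suc_diff_le)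
        next
          case 4 then show ?thesis using sl[of "Suc i" "Suc (Suc i)"]
            by (auto simp: c'_def Suc_diff_le)
        next
          case 5
          then have "c (Suc (m - k)) < c (Suc (Suc m - k))" "c (Suc i) \<le> c (Suc (m - k))"
            using sl sle by (auto simp: Suc_diff_le)
          then show ?thesis using 5 by (auto simp: c'_def)
        qed
      qed
    qed
    have "\<mu> \<le> meas A f' \<psi> c' m" for m
    proof -
      consider "m \<le> i" | j where "m = i + Suc j" "j < k" | j where "m = i + k + Suc j"
      proof -
        assume a1: "m \<le> i \<Longrightarrow> thesis"
          and a2: "\<And>j. m = i + Suc j \<Longrightarrow> j < k \<Longrightarrow> thesis"
          and a3: "\<And>j. m = i + k + Suc j \<Longrightarrow> thesis"
        show thesis
        proof (cases "m \<le> i")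
          case True then show ?thesis by (rule a1)
        next
          case False
          show ?thesis
          proof (cases "m \<le> i + k")
            case True
            then show ?thesis using False a2[of "m - i - 1"] by simp
          next
            case False
            then show ?thesis using a3[of "m - i - k - 1"] by simp
          qed
        qed
      qed
      then show ?thesis
      proof cases
        case 1
        have "meas A f' \<psi> c' m = meas A f \<psi> c m"
        proof (rule meas_eq)
          show "sv A \<psi> m = sv A \<psi> m" ..
          have stq: "st c' m = st c m" using 1 by (cases m) (auto simp: c'_def)
          have cq: "c' m = c m" using 1 by (simp add: c'_def)
          show "c' m - st c' m = c m - st c m" using stq cq by simp
          fix t assume t: "t < c m - st c m"
          have "st c m + t < c i" using t 1 sle[of m i] by linarith
          then show "f' (st c' m + t) = f (st c m + t)" using stq la by simp
        qed
        then show ?thesis using mu by simp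
      next
        case 2
        have "meas A f' \<psi> c' m = meas A f \<psi> c (Suc i)"
        proof (rule meas_eq)
          show "sv A \<psi> m = sv A \<psi> (Suc i)" using 2 by simp
          have stq: "st c' m = c i + j * d" using 2 by (cases j) (auto simp: c'_def)
          have cq: "c' m = c i + j * d + d" using 2 by (simp add: c'_def)
          show "c' m - st c' m = c (Suc i) - st c (Suc i)" using stq cq cS by simp
          fix t assume t: "t < c (Suc i) - st c (Suc i)"
          then have t': "t < d" using cS by simp
          then have "j * d + t < k * d" using 2
          proof -
            have "j * d + t < j * d + d" using t' by simp
            also have "\<dots> = Suc j * d" by simp
            also have "\<dots> \<le> k * d" using 2 by (intro mult_le_mono1) simp
            finally show ?thesis .
          qed
          then have "f' (c i + (j * d + t)) = f (c i + (j * d + t) mod d)" by (rule lb)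
          also have "(j * d + t) mod d = t" using t' by simp
          finally show "f' (st c' m + t) = f (st c (Suc i) + t)" using stq by (simp add: add.assoc)
        qed
        then show ?thesis using mu by simp
      next
        case 3
        have "meas A f' \<psi> c' m = meas A f \<psi> c (Suc (Suc (i + j)))"
        proof (rule meas_eq)
          show "sv A \<psi> m = sv A \<psi> (Suc (Suc (i + j)))" using 3 by simp
          have mono1: "c (Suc i) \<le> c (Suc (i + j))" using sle by simp
          have stq: "st c' m = c i + k * d + (c (Suc (i + j)) - c (Suc i))"
            using 3 cS by (cases j; cases k) (auto simp: c'_def)
          have cq: "c' m = c i + k * d + (c (Suc (Suc (i + j))) - c (Suc i))"
            using 3 by (simp add: c'_def)
          have mono2: "c (Suc (i + j)) < c (Suc (Suc (i + j)))" using sl by simp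
          show "c' m - st c' m = c (Suc (Suc (i + j))) - st c (Suc (Suc (i + j)))"
            using stq cq mono1 mono2 by simp
          fix t
          have "f' (st c' m + t) = f (c (Suc i) + ((c (Suc (i + j)) - c (Suc i)) + t))"
            unfolding stq using lc by (simp add: add.assoc)
          also have "\<dots> = f (st c (Suc (Suc (i + j))) + t)" using mono1 by simp
          finally show "f' (st c' m + t) = f (st c (Suc (Suc (i + j))) + t)" .
        qed
        then show ?thesis using mu by simp
      qed
    qed
    then show ?thesis using L_intro[OF p(1,2) sm p(4)] unfolding f'_def by blast
  qed
  then show ?thesis using dec lxn ly d1 by blast
qed



lemma part1:
  assumes wf: "qaut_wf A" and f: "u \<frown> v \<in> langD A lam" and wne: "w \<noteq> []"
  shows "infinite {k::nat. k > 0 \<and> (u @ concat (replicate k w)) \<frown> v \<in> langD A lam}"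
proof -
  obtain \<psi> c \<mu> where p: "\<psi> \<in> qa_acc A" "norm \<psi> = 1" "strict_mono c" "lam < \<mu>"
    and mu: "\<And>j. \<mu> \<le> meas A (u \<frown> v) \<psi> c j" using L_elim[OF f] by blast
  have sl: "\<And>a b. (c a < c b) = (a < b)" using strict_mono_less[OF p(3)] .
  have sle: "\<And>a b. (c a \<le> c b) = (a \<le> b)" using strict_mono_less_eq[OF p(3)] .
  define f0 where "f0 = u \<frown> v"
  define P where "P = length u"
  define L where "L = length w"
  have L0: "L > 0" using wne L_def by simp
  define U where "U = Mw A (w\<^sup>\<omega>) 0 L"
  have nU: "\<And>x. norm (U *v x) = norm x" unfolding U_def using Mw_norm[OF wf] by blast
  have ex: "\<exists>j. P < c j" using strict_mono_imp_increasing[OF p(3), of "Suc P"] by (intro exI[of _ "Suc P"]) simp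
  define j0 where "j0 = (LEAST j. P < c j)"
  have cj0: "P < c j0" unfolding j0_def using LeastI_ex[OF ex] .
  have before: "\<And>j. j < j0 \<Longrightarrow> c j \<le> P" unfolding j0_def using not_less_Least by fastforce
  define a where "a = st c j0"
  have aP: "a \<le> P" unfolding a_def using before by (cases j0) auto
  define y0 where "y0 = sv A \<psi> j0"
  have ny0: "norm y0 = 1" unfolding y0_def using wf p(2) by (cases j0) (auto simp: qaut_wf_def)
  define y where "y = Mw A f0 a (P - a) *v y0"
  have ny: "norm y = 1" unfolding y_def using ny0 Mw_norm[OF wf] by simp
  define \<delta> where "\<delta> = (\<mu> - lam) / 4"
  have d0: "\<delta> > 0" using p(4) \<delta>_def by simp
  have "\<forall>N. \<exists>k>N. k \<in> {k::nat. k > 0 \<and> (u @ concat (replicate k w)) \<frown> v \<in> langD A lam}"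
  proof
    fix N
    obtain k where k: "k > N" "norm (mpow U k *v y - y) < \<delta>"
      using recurrence[OF nU d0, of N y] by blast
    define K where "K = k * L"
    define f' where "f' = (u @ concat (replicate k w)) \<frown> v"
    have lcr: "length (concat (replicate k w)) = K" unfolding K_def L_def
      by (simp add: length_concat sum_list_replicate)
    have la: "\<And>t. t < P \<Longrightarrow> f' t = f0 t" unfolding f'_def f0_def P_def
      by (simp add: nth_append)
    have lb: "\<And>t. t < K \<Longrightarrow> f' (P + t) = w\<^sup>\<omega> t"
    proof -
      fix t assume t: "t < K"
      have "f' (P + t) = (u @ concat (replicate k w)) ! (P + t)" unfolding f'_def
        using t lcr P_def by (intro conc_fst) simp
      also have "\<dots> = concat (replicate k w) ! t" using P_def by (simp add: nth_append)
      also have "\<dots> = w ! (t mod length w)" using concat_rep_nth[of t k w] t K_def L_def by simp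
      also have "\<dots> = w\<^sup>\<omega> t" using wne by simp
      finally show "f' (P + t) = w\<^sup>\<omega> t" .
    qed
    have lc: "\<And>t. P \<le> t \<Longrightarrow> f' (t + K) = f0 t" unfolding f'_def f0_def using lcr P_def
      by simp
    define c' where "c' j = (if j < j0 then c j else c j + K)" for j
    have sm: "strict_mono c'" unfolding strict_mono_Suc_iff
    proof
      fix j show "c' j < c' (Suc j)" using sl[of j "Suc j"] by (auto simp: c'_def)
    qed
    define \<mu>' where "\<mu>' = \<mu> - 2 * \<delta>"
    have "\<mu>' \<le> meas A f' \<psi> c' j" for j
    proof -
      consider "j < j0" | "j = j0" | i where "j = Suc i" "j0 \<le> i"
      proof -
        assume a1: "j < j0 \<Longrightarrow> thesis" and a2: "j = j0 \<Longrightarrow> thesis"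
          and a3: "\<And>i. j = Suc i \<Longrightarrow> j0 \<le> i \<Longrightarrow> thesis"
        show thesis
        proof (cases "j < j0")
          case True then show ?thesis by (rule a1)
        next
          case False
          show ?thesis
          proof (cases "j = j0")
            case True then show ?thesis by (rule a2)
          next
            case F2: False
            then show ?thesis using False a3[of "j - 1"] by simp
          qed
        qed
      qed
      then show ?thesis
      proof cases
        case 1
        have "meas A f' \<psi> c' j = meas A f0 \<psi> c j"
        proof (rule meas_eq)
          show "sv A \<psi> j = sv A \<psi> j" ..
          have stq: "st c' j = st c j" using 1 by (cases j) (auto simp: c'_def)
          have cq: "c' j = c j" using 1 by (simp add: c'_def)
          show "c' j - st c' j = c j - st c j" using stq cq by simp
          fix t assume t: "t < c j - st c j"
          have "st c j + t < P" using t before[OF 1] by linarith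
          then show "f' (st c' j + t) = f0 (st c j + t)" using stq la by simp
        qed
        then show ?thesis using mu[of j] d0 \<mu>'_def f0_def by simp
      next
        case 3
        have "meas A f' \<psi> c' j = meas A f0 \<psi> c j"
        proof (rule meas_eq)
          show "sv A \<psi> j = sv A \<psi> j" ..
          have stq: "st c' j = c i + K" using 3 by (simp add: c'_def)
          have cq: "c' j = c j + K" using 3 by (simp add: c'_def)
          have "c i < c j" using 3 sl by simp
          then show "c' j - st c' j = c j - st c j" using stq cq 3 by simp
          fix t
          have "P < c i" using cj0 sle[of j0 i] 3 by simp
          then have "f' (c i + t + K) = f0 (c i + t)" by (intro lc) simp
          then show "f' (st c' j + t) = f0 (st c j + t)" using stq 3 by (simp add: ac_simps)
        qed
        then show ?thesis using mu[of j] d0 \<mu>'_def f0_def by simp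
      next
        case 2
        have stq: "st c' j0 = a" unfolding a_def by (cases j0) (auto simp: c'_def)
        have cq: "c' j0 = c j0 + K" by (simp add: c'_def)
        define M2 where "M2 = Mw A f0 P (c j0 - P)"
        have len: "c' j0 - st c' j0 = (P - a) + K + (c j0 - P)" using stq cq aP cj0 by simp
        have "Mw A f' a ((P - a) + K + (c j0 - P))
            = Mw A f' (a + ((P - a) + K)) (c j0 - P) ** (Mw A f' (a + (P - a)) K ** Mw A f' a (P - a))"
          by (simp only: Mw_add)
        also have "a + ((P - a) + K) = P + K" using aP by simp
        also have "a + (P - a) = P" using aP by simp
        also have "Mw A f' (P + K) (c j0 - P) = M2" unfolding M2_def
        proof (rule Mw_cong)
          fix t show "f' (P + K + t) = f0 (P + t)" using lc[of "P + t"] by (simp add: ac_simps)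
        qed
        also have "Mw A f' P K = mpow U k"
        proof -
          have "Mw A f' P K = Mw A (w\<^sup>\<omega>) (0 * length w) (k * length w)"
            unfolding K_def L_def by (rule Mw_cong) (simp add: lb[unfolded K_def L_def])
          also have "\<dots> = mpow U k" unfolding U_def L_def by (rule omega_mpow[OF wne])
          finally show ?thesis .
        qed
        also have "Mw A f' a (P - a) = Mw A f0 a (P - a)"
          by (rule Mw_cong) (rule la, linarith)
        finally have Mnew: "Mw A f' (st c' j0) (c' j0 - st c' j0) = M2 ** (mpow U k ** Mw A f0 a (P - a))"
          using len stq by simp
        have "Mw A f0 a (c j0 - a) = Mw A f0 a ((P - a) + (c j0 - P))" using aP cj0 by simp
        also have "\<dots> = M2 ** Mw A f0 a (P - a)" unfolding M2_def by (simp only: Mw_add) (simp add: aP)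
        finally have Mold: "Mw A f0 (st c j0) (c j0 - st c j0) = M2 ** Mw A f0 a (P - a)"
          unfolding a_def .
        have vnew: "meas A f' \<psi> c' j0 = (cmod (cinner \<psi> (M2 *v (mpow U k *v y))))^2"
          unfolding meas_def Mnew y_def y0_def by (simp add: matrix_vector_mul_assoc)
        have vold: "meas A f0 \<psi> c j0 = (cmod (cinner \<psi> (M2 *v y)))^2"
          unfolding meas_def Mold y_def y0_def by (simp add: matrix_vector_mul_assoc)
        have nd: "norm (M2 *v (mpow U k *v y) - M2 *v y) < \<delta>"
          using k(2) Mw_norm[OF wf] M2_def by (simp add: matrix_vector_mult_diff_distrib[symmetric])
        have "(cmod (cinner \<psi> (M2 *v (mpow U k *v y))))^2
            \<ge> (cmod (cinner \<psi> (M2 *v y)))^2 - 2 * norm (M2 *v (mpow U k *v y) - M2 *v y)"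
          by (rule perturb) (simp_all add: p(2) M2_def Mw_norm[OF wf] mpow_norm[OF nU] ny)
        then show ?thesis using vnew vold nd mu[of j0] 2 \<mu>'_def f0_def by simp
      qed
    qed
    moreover have "lam < \<mu>'" unfolding \<mu>'_def \<delta>_def using p(4) by (simp add: field_simps)
    ultimately have "f' \<in> langD A lam" using L_intro[OF p(1,2) sm] by blast
    then show "\<exists>k>N. k \<in> {k::nat. k > 0 \<and> (u @ concat (replicate k w)) \<frown> v \<in> langD A lam}"
      using k(1) f'_def by auto
  qed
  then show ?thesis using infinite_nat_iff_unbounded by blast
qed


theorem theorem4:
  fixes A :: "('a::finite, 'n::finite) qaut" and lam :: real
  assumes "qaut_wf A" and "0 \<le> lam" and "lam < 1"
  defines "L \<equiv> langD A lam"
  shows "(\<forall>w u v. w \<noteq> [] \<longrightarrow> u \<frown> v \<in> L \<longrightarrow>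
            infinite {k::nat. k > 0 \<and> (u @ concat (replicate k w)) \<frown> v \<in> L})
       \<and> (\<forall>v \<in> L. infinite {m::nat. \<forall>w. w \<noteq> [] \<longrightarrow> prefix m v \<frown> w\<^sup>\<omega> \<in> L})
       \<and> (\<forall>n::nat. n > 0 \<longrightarrow> (\<forall>w \<in> L. \<exists>x y z. w = x \<frown> (y \<frown> z) \<and> length x \<ge> n \<and> length y \<ge> 1
            \<and> (\<forall>k::nat. (x @ concat (replicate k y)) \<frown> z \<in> L)))"
proof (intro conjI allI impI ballI)
  fix w u :: "'a list" and v :: "'a word" assume "w \<noteq> []" "u \<frown> v \<in> L"
  then show "infinite {k::nat. k > 0 \<and> (u @ concat (replicate k w)) \<frown> v \<in> L}"
    unfolding L_def using part1[OF assms(1)] by blast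
next
  fix v :: "'a word" assume "v \<in> L"
  then show "infinite {m::nat. \<forall>w. w \<noteq> [] \<longrightarrow> prefix m v \<frown> w\<^sup>\<omega> \<in> L}"
    unfolding L_def using part2[OF assms(1) assms(3)] by blast
next
  fix n :: nat and w :: "'a word" assume "n > 0" "w \<in> L"
  then show "\<exists>x y z. w = x \<frown> (y \<frown> z) \<and> length x \<ge> n \<and> length y \<ge> 1
            \<and> (\<forall>k::nat. (x @ concat (replicate k y)) \<frown> z \<in> L)"
    unfolding L_def using part3 by blast
qed

end
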